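(* Let $\mathbb L$ be an infinite set. The family $\mathcal Q=\{Q^<_{AB}: A,B\in\mathbb W,\ |A|<|B|\}\cup\{C(d):d\in\mathbb I\}$, where $Q^<_{AB}=\{i\in\mathbb I:|A_i|<|B_i|\}$ and $C(d)=\{i\in\mathbb I: d\subseteq i\}$, has the finite intersection property. Consequently there is a fine ultrafilter $\mathcal U\supseteq\mathcal Q$ on $\mathbb I$, and for any such $\mathcal U$ the finitely approximable numerosity theory $\preceq_{\mathcal U}$ (defined by $A\preceq_{\mathcal U}B$ iff $\{i\in\mathbb I:|A_i|\le|B_i|\}\in\mathcal U$) satisfies the Weak Hume Principle: for all $A,B\in\mathbb W$, if $A\preceq_{\mathcal U}B$ then there is an injective map $f:A\to B$ (equivalently, $|A|\le|B|$).
   Context: A point over $\mathbb L$ is either an element of $\mathbb L$ or a finite tuple $(x_1,\dots,x_n)$, $n\ge1$, of points over $\mathbb L$ ($\mathbb L$ contains no tuples of points); $P$ is the set of all points; $supp(x)=\{x\}$ for $x\in\mathbb L$ and $supp(x_1,\dots,x_n)=\bigcup_k supp(x_k)$. $\mathbb W$ is the family of finitary point sets: $A\subseteq P$ such that $\{a\in A:supp(a)=i\}$ is finite for every finite $i\subseteq\mathbb L$. $\mathbb I=[\mathbb L]^{<\omega}$ is the set of finite subsets of $\mathbb L$, and $A_i=\{a\in A:supp(a)\subseteq i\}$. A filter on $\mathbb I$ is fine if it contains every cone $C(d)$, $d\in\mathbb I$. *)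

theory Defs
  imports Main
begin

text \<open>Points over the ground set L (taken to be the universe of the type 'a).
  A tuple is represented by a list of points; well-formed points require
  nonempty tuples.\<close>

datatype 'a point = Atom 'a | Tup "'a point list"

inductive is_point :: "'a point \<Rightarrow> bool" where
  atom: "is_point (Atom x)"
| tup: "xs \<noteq> [] \<Longrightarrow> (\<forall>y\<in>set xs. is_point y) \<Longrightarrow> is_point (Tup xs)"

definition Points :: "'a point set" where
  "Points = {p. is_point p}"

fun supp :: "'a point \<Rightarrow> 'a set" where
  "supp (Atom x) = {x}"
| "supp (Tup xs) = (\<Union>y\<in>set xs. supp y)"

definition W :: "'a point set set" where
  "W = {A. A \<subseteq> Points \<and> (\<forall>i. finite i \<longrightarrow> finite {a\<in>A. supp a = i})}"

definition Iset :: "'a set set" where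
  "Iset = {i. finite i}"

definition restr :: "'a point set \<Rightarrow> 'a set \<Rightarrow> 'a point set" where
  "restr A i = {a\<in>A. supp a \<subseteq> i}"

definition cone :: "'a set \<Rightarrow> 'a set set" where
  "cone d = {i\<in>Iset. d \<subseteq> i}"

definition Qlt :: "'a point set \<Rightarrow> 'a point set \<Rightarrow> 'a set set" where
  "Qlt A B = {i\<in>Iset. card (restr A i) < card (restr B i)}"

definition Qfam :: "'a set set set" where
  "Qfam = {Qlt A B | A B. A \<in> W \<and> B \<in> W \<and> (card_of A, card_of B) \<in> ordLess} \<union> {cone d | d. d \<in> Iset}"

definition fip :: "'b set set \<Rightarrow> bool" where
  "fip F \<longleftrightarrow> (\<forall>G. finite G \<and> G \<noteq> {} \<and> G \<subseteq> F \<longrightarrow> \<Inter>G \<noteq> {})"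

definition ultrafilter_on :: "'b set \<Rightarrow> 'b set set \<Rightarrow> bool" where
  "ultrafilter_on I U \<longleftrightarrow>
     U \<subseteq> Pow I \<and> I \<in> U \<and> {} \<notin> U \<and>
     (\<forall>X\<in>U. \<forall>Y\<in>U. X \<inter> Y \<in> U) \<and>
     (\<forall>X\<in>U. \<forall>Y. X \<subseteq> Y \<and> Y \<subseteq> I \<longrightarrow> Y \<in> U) \<and>
     (\<forall>X. X \<subseteq> I \<longrightarrow> X \<in> U \<or> I - X \<in> U)"

definition fine :: "'a set set set \<Rightarrow> bool" where
  "fine U \<longleftrightarrow> (\<forall>d\<in>Iset. cone d \<in> U)"

definition num_le :: "'a set set set \<Rightarrow> 'a point set \<Rightarrow> 'a point set \<Rightarrow> bool" where
  "num_le U A B \<longleftrightarrow> {i\<in>Iset. card (restr A i) \<le> card (restr B i)} \<in> U"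

end

theory Submission
  imports Defs
begin
context includes cardinal_syntax begin

lemma finite_supp: "finite (supp a)"
  by (induction a) auto

lemma fin_less_inf: "finite X \<Longrightarrow> infinite Y \<Longrightarrow> |X| <o |Y|"
  by (rule finite_ordLess_infinite) (auto simp: card_of_Well_order Field_card_of card_of_well_order_on)

lemma fin_leq_inf: "finite X \<Longrightarrow> infinite Y \<Longrightarrow> |X| \<le>o |Y|"
  using fin_less_inf ordLess_imp_ordLeq by blast

lemma union_supp_less:
  assumes "|A| <o |B|" "infinite B"
  shows "|\<Union>a\<in>A. supp a| <o |B|"
proof (cases "finite A")
  case True
  then show ?thesis using assms(2) fin_less_inf finite_supp by blast
next
  case False
  have "|\<Union>a\<in>A. supp a| \<le>o |A|"
    by (rule card_of_UNION_ordLeq_infinite[OF False])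
       (use fin_leq_inf[OF finite_supp False] card_of_Well_order ordLeq_reflexive in blast)+
  then show ?thesis using assms(1) ordLeq_ordLess_trans by blast
qed

lemma finite_UN_less:
  assumes "finite P" "infinite C" "\<forall>p\<in>P. |X p| <o |C|"
  shows "|\<Union>p\<in>P. X p| <o |C|"
  using assms
proof (induction P rule: finite_induct)
  case empty
  then show ?case using fin_less_inf by auto
next
  case (insert x F)
  then show ?case by (simp add: card_of_Un_ordLess_infinite)
qed

lemma Fpow_leq:
  assumes "infinite S"
  shows "|{t. t \<subseteq> S \<and> finite t}| \<le>o |S|"
proof -
  define G where "G n = {t. t \<subseteq> S \<and> finite t \<and> card t \<le> n}" for n
  have G: "|G n| \<le>o |S|" for n
  proof (induction n)
    case 0
    have "G 0 = {{}}" unfolding G_def by auto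
    then show ?case using fin_leq_inf[of "{{}}" S] assms by simp
  next
    case (Suc n)
    have "G (Suc n) \<subseteq> G n \<union> (\<lambda>(x,t). insert x t) ` (S \<times> G n)"
    proof
      fix t assume t: "t \<in> G (Suc n)"
      show "t \<in> G n \<union> (\<lambda>(x,t). insert x t) ` (S \<times> G n)"
      proof (cases "t = {}")
        case True then show ?thesis unfolding G_def by auto
      next
        case False
        then obtain x where x: "x \<in> t" by auto
        have "t = insert x (t - {x})" using x by auto
        moreover have "t - {x} \<in> G n" using t x unfolding G_def by auto
        moreover have "x \<in> S" using t x unfolding G_def by auto
        ultimately show ?thesis by (intro UnI2 image_eqI[where x="(x, t - {x})"]) auto
      qed
    qed
    moreover have im: "|(\<lambda>(x,t). insert x t) ` (S \<times> G n)| \<le>o |S|"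
    proof -
      have "{} \<in> G n" unfolding G_def by simp
      then have ne: "G n \<noteq> {}" by blast
      have "|S \<times> G n| \<le>o |S|" by (rule ordIso_imp_ordLeq[OF conjunct1[OF card_of_Times_infinite[OF assms ne Suc]]])
      then show ?thesis by (rule ordLeq_transitive[OF card_of_image])
    qed
    have "|G n \<union> (\<lambda>(x,t). insert x t) ` (S \<times> G n)| \<le>o |S|"
      by (rule card_of_Un_ordLeq_infinite_Field[OF _ Suc im card_of_Card_order]) (simp add: Field_card_of assms)
    then show ?case by (rule ordLeq_transitive[OF card_of_mono1[OF \<open>G (Suc n) \<subseteq> _\<close>]])
  qed
  have "{t. t \<subseteq> S \<and> finite t} = (\<Union>n. G n)" unfolding G_def by blast
  moreover have "|\<Union>n. G n| \<le>o |S|"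
    by (rule card_of_UNION_ordLeq_infinite[OF assms]) (simp_all add: G assms[unfolded infinite_iff_card_of_nat])
  ultimately show ?thesis by simp
qed

lemma trace_class:
  assumes "infinite B" "|S| <o |B|"
  shows "\<exists>t. finite t \<and> t \<subseteq> S \<and> infinite {b\<in>B. supp b \<inter> S = t}"
proof (rule ccontr)
  assume H: "\<not> ?thesis"
  let ?F = "{t. t \<subseteq> S \<and> finite t}"
  have Bs: "B \<subseteq> (\<Union>t\<in>?F. {b\<in>B. supp b \<inter> S = t})"
  proof
    fix b assume b: "b \<in> B"
    have "supp b \<inter> S \<in> ?F" using finite_supp[of b] by simp
    then show "b \<in> (\<Union>t\<in>?F. {b\<in>B. supp b \<inter> S = t})" using b by blast
  qed
  have fin: "finite {b\<in>B. supp b \<inter> S = t}" if "t \<in> ?F" for t using H that by blast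
  show False
  proof (cases "finite S")
    case True
    have "finite ?F" by (rule finite_subset[of _ "Pow S"]) (auto simp: True)
    then have "finite (\<Union>t\<in>?F. {b\<in>B. supp b \<inter> S = t})" using fin by (rule finite_UN_I)
    then have "finite B" using Bs by (rule finite_subset[rotated])
    then show False using assms(1) by simp
  next
    case False
    have "|\<Union>t\<in>?F. {b\<in>B. supp b \<inter> S = t}| \<le>o |S|"
    proof (rule card_of_UNION_ordLeq_infinite[OF False Fpow_leq[OF False]], rule ballI)
      fix t assume "t \<in> ?F"
      then show "|{b\<in>B. supp b \<inter> S = t}| \<le>o |S|" using fin_leq_inf[OF fin False] by blast
    qed
    then have "|B| \<le>o |S|" by (rule ordLeq_transitive[OF card_of_mono1[OF Bs]])
    then show False using assms(2) not_ordLess_ordLeq by blast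
  qed
qed

lemma max_card:
  assumes "finite P" "P \<noteq> {}"
  shows "\<exists>k\<in>P. \<forall>p\<in>P. |f p| \<le>o |f k|"
  using assms
proof (induction P rule: finite_ne_induct)
  case (singleton x)
  have "|f x| \<le>o |f x|" by (rule ordLeq_reflexive[OF card_of_Well_order])
  then show ?case by simp
next
  case (insert x F)
  then obtain k where k: "k \<in> F" "\<forall>p\<in>F. |f p| \<le>o |f k|" by blast
  have rx: "|f x| \<le>o |f x|" by (rule ordLeq_reflexive[OF card_of_Well_order])
  have "|f x| \<le>o |f k| \<or> |f k| \<le>o |f x|" by (rule ordLeq_total[OF card_of_Well_order card_of_Well_order])
  then show ?case
  proof
    assume "|f x| \<le>o |f k|" then show ?thesis using k by blast
  next
    assume h: "|f k| \<le>o |f x|"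
    have "\<forall>p\<in>insert x F. |f p| \<le>o |f x|"
    proof
      fix p assume "p \<in> insert x F"
      then show "|f p| \<le>o |f x|"
      proof
        assume "p = x" then show ?thesis using rx by simp
      next
        assume "p \<in> F" then show ?thesis using k(2) h ordLeq_transitive by blast
      qed
    qed
    then show ?thesis by blast
  qed
qed


lemma restr_finite:
  assumes "A \<in> W" "finite i"
  shows "finite (restr A i)"
proof -
  have "restr A i \<subseteq> (\<Union>j\<in>Pow i. {a\<in>A. supp a = j})" unfolding restr_def by blast
  moreover have "finite (\<Union>j\<in>Pow i. {a\<in>A. supp a = j})"
  proof (rule finite_UN_I)
    show "finite (Pow i)" using assms(2) by simp
    fix j assume "j \<in> Pow i"
    then have "finite j" using assms(2) finite_subset by blast
    then show "finite {a\<in>A. supp a = j}" using assms(1) unfolding W_def by blast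
  qed
  ultimately show ?thesis by (rule finite_subset)
qed

lemma restr_mono: "i \<subseteq> j \<Longrightarrow> restr A i \<subseteq> restr A j"
  unfolding restr_def by blast

lemma fin_card_less:
  assumes "finite B" "|A| <o |B|"
  shows "card A < card B"
proof (rule ccontr)
  assume "\<not> card A < card B"
  then have "card B \<le> card A" by simp
  moreover have "finite A" using assms ordLess_imp_ordLeq card_of_ordLeq_finite by blast
  ultimately obtain f where "f ` B \<subseteq> A" "inj_on f B" using card_le_inj[OF assms(1)] by blast
  then have "|B| \<le>o |A|" using card_of_ordLeq by blast
  then show False using assms(2) not_ordLess_ordLeq by blast
qed

lemma key:
  fixes P :: "('a point set \<times> 'a point set) set"
  assumes "finite P" "\<forall>p\<in>P. fst p \<in> W \<and> snd p \<in> W \<and> |fst p| <o |snd p|" "finite d"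
  shows "\<exists>i. finite i \<and> d \<subseteq> i \<and> (\<forall>p\<in>P. card (restr (fst p) i) < card (restr (snd p) i))"
  using assms
proof (induction "card P" arbitrary: P d rule: less_induct)
  case less
  show ?case
  proof (cases "P = {}")
    case True then show ?thesis using less.prems(3) by blast
  next
    case False
    obtain k where k: "k \<in> P" "\<forall>p\<in>P. |snd p| \<le>o |snd k|"
      using max_card[OF less.prems(1) False] by blast
    obtain A B where AB: "k = (A,B)" by (cases k)
    have "fst k \<in> W \<and> snd k \<in> W \<and> |fst k| <o |snd k|" using less.prems(2) k(1) by blast
    then have AW: "A \<in> W" "B \<in> W" "|A| <o |B|" unfolding AB by simp_all
    let ?P' = "P - {k}"
    have cP: "card ?P' < card P" by (rule card_Diff1_less[OF less.prems(1) k(1)])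
    have fP: "finite ?P'" using less.prems(1) by simp
    have hP: "\<forall>p\<in>?P'. fst p \<in> W \<and> snd p \<in> W \<and> |fst p| <o |snd p|" using less.prems(2) by blast
    have IH: "\<exists>i. finite i \<and> e \<subseteq> i \<and> (\<forall>p\<in>?P'. card (restr (fst p) i) < card (restr (snd p) i))"
      if "finite e" for e
      using less.hyps[OF cP fP hP that] by blast
    show ?thesis
    proof (cases "finite B")
      case True
      have fA: "finite A" using True AW(3) ordLess_imp_ordLeq card_of_ordLeq_finite by blast
      let ?e = "d \<union> (\<Union>a\<in>A\<union>B. supp a)"
      have "finite (\<Union>a\<in>A\<union>B. supp a)" by (rule finite_UN_I) (simp_all add: fA True finite_supp)
      then have fe: "finite ?e" using less.prems(3) by simp
      obtain i where i: "finite i" "?e \<subseteq> i"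
        "\<forall>p\<in>?P'. card (restr (fst p) i) < card (restr (snd p) i)" using IH[OF fe] by blast
      have "\<forall>a\<in>A\<union>B. supp a \<subseteq> i" using i(2) by blast
      then have "restr A i = A" "restr B i = B" unfolding restr_def by blast+
      then have "card (restr A i) < card (restr B i)" using fin_card_less[OF True AW(3)] by simp
      then have "\<forall>p\<in>P. card (restr (fst p) i) < card (restr (snd p) i)"
      proof -
        assume kk: "card (restr A i) < card (restr B i)"
        show ?thesis
        proof
          fix p assume p: "p \<in> P"
          show "card (restr (fst p) i) < card (restr (snd p) i)"
          proof (cases "p = k")
            case True then show ?thesis using kk AB by simp
          next
            case False then show ?thesis using i(3) p by blast
          qed
        qed
      qed
      then show ?thesis using i(1,2) by blast
    next
      case False
      define S where "S = (\<Union>p\<in>P. \<Union>a\<in>fst p. supp a)"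
      have SB: "|S| <o |B|" unfolding S_def
      proof (rule finite_UN_less[OF less.prems(1) False], rule ballI)
        fix p assume p: "p \<in> P"
        have l1: "|fst p| <o |snd p|" using less.prems(2) p by blast
        have "|snd p| \<le>o |snd k|" using k(2) p by blast
        then have l2: "|snd p| \<le>o |B|" using AB by simp
        have "|fst p| <o |B|" by (rule ordLess_ordLeq_trans[OF l1 l2])
        then show "|\<Union>a\<in>fst p. supp a| <o |B|" by (rule union_supp_less[OF _ False])
      qed
      obtain t where t: "finite t" "t \<subseteq> S" "infinite {b\<in>B. supp b \<inter> S = t}"
        using trace_class[OF False SB] by blast
      obtain i' where i': "finite i'" "d \<union> t \<subseteq> i'"
        "\<forall>p\<in>?P'. card (restr (fst p) i') < card (restr (snd p) i')"
        using IH[of "d \<union> t"] less.prems(3) t(1) by blast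
      obtain D where D: "finite D" "card D = Suc (card (restr A i'))" "D \<subseteq> {b\<in>B. supp b \<inter> S = t}"
        using infinite_arbitrarily_large[OF t(3)] by blast
      define i where "i = i' \<union> (\<Union>b\<in>D. supp b)"
      have fi: "finite i" using D(1) i'(1) finite_supp unfolding i_def by auto
      have ii: "i' \<subseteq> i" unfolding i_def by blast
      have same: "restr (fst p) i = restr (fst p) i'" if p: "p \<in> P" for p
      proof
        show "restr (fst p) i' \<subseteq> restr (fst p) i" by (rule restr_mono[OF ii])
        show "restr (fst p) i \<subseteq> restr (fst p) i'"
        proof
          fix a assume a: "a \<in> restr (fst p) i"
          have aS: "supp a \<subseteq> S" using a p unfolding S_def restr_def by blast
          have "supp a \<subseteq> i'"
          proof
            fix x assume x: "x \<in> supp a"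
            have "x \<in> i" using a x unfolding restr_def by blast
            then show "x \<in> i'"
            proof (unfold i_def, elim UnE)
              assume "x \<in> (\<Union>b\<in>D. supp b)"
              then obtain b where b: "b \<in> D" "x \<in> supp b" by blast
              have "supp b \<inter> S = t" using b(1) D(3) by blast
              then have "x \<in> t" using b(2) x aS by blast
              then show "x \<in> i'" using i'(2) by blast
            qed
          qed
          then show "a \<in> restr (fst p) i'" using a unfolding restr_def by blast
        qed
      qed
      have mono: "card (restr (snd p) i') \<le> card (restr (snd p) i)" if p: "p \<in> P" for p
      proof -
        have "snd p \<in> W" using less.prems(2) p by blast
        then show ?thesis by (rule card_mono[OF restr_finite[OF _ fi] restr_mono[OF ii]])
      qed
      have "D \<subseteq> restr B i" using D(3) unfolding restr_def i_def by blast
      then have "card D \<le> card (restr B i)" by (rule card_mono[OF restr_finite[OF AW(2) fi]])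
      moreover have "restr A i = restr A i'" using same[OF k(1)] AB by simp
      ultimately have kk: "card (restr A i) < card (restr B i)" using D(2) by simp
      have "\<forall>p\<in>P. card (restr (fst p) i) < card (restr (snd p) i)"
      proof
        fix p assume p: "p \<in> P"
        show "card (restr (fst p) i) < card (restr (snd p) i)"
        proof (cases "p = k")
          case True then show ?thesis using kk AB by simp
        next
          case False
          then have "card (restr (fst p) i') < card (restr (snd p) i')" using i'(3) p by blast
          then show ?thesis using same[OF p] mono[OF p] by simp
        qed
      qed
      then show ?thesis using fi i'(2) ii by blast
    qed
  qed
qed

end

lemma fip_insert:
  assumes "fip M" "\<forall>G. finite G \<and> G \<subseteq> M \<longrightarrow> Z \<inter> \<Inter>G \<noteq> {}"
  shows "fip (insert Z M)"
  unfolding fip_def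
proof (intro allI impI, elim conjE)
  fix G assume G: "finite G" "G \<noteq> {}" "G \<subseteq> insert Z M"
  show "\<Inter>G \<noteq> {}"
  proof (cases "Z \<in> G")
    case True
    have "\<Inter>G = Z \<inter> \<Inter>(G - {Z})" using True by blast
    moreover have "G - {Z} \<subseteq> M" using G by blast
    ultimately show ?thesis using assms(2) G(1) by simp
  next
    case False
    then have "G \<subseteq> M" using G by blast
    then show ?thesis using assms(1) G unfolding fip_def by blast
  qed
qed

lemma ultra_exists:
  assumes "fip F" "F \<subseteq> Pow I" "I \<noteq> {}"
  shows "\<exists>U. ultrafilter_on I U \<and> F \<subseteq> U"
proof -
  let ?A = "{M. F \<subseteq> M \<and> M \<subseteq> Pow I \<and> fip M}"
  have "\<forall>C\<in>chains ?A. \<exists>U\<in>?A. \<forall>X\<in>C. X \<subseteq> U"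
  proof
    fix C assume C: "C \<in> chains ?A"
    show "\<exists>U\<in>?A. \<forall>X\<in>C. X \<subseteq> U"
    proof (cases "C = {}")
      case True
      have "F \<in> ?A" using assms(1,2) by simp
      then show ?thesis using True by blast
    next
      case False
      have CA: "C \<subseteq> ?A" using C unfolding chains_def by blast
      have sub: "\<exists>X\<in>C. G \<subseteq> X" if "finite G" "G \<subseteq> \<Union>C" for G
        using that
      proof (induction G rule: finite_induct)
        case empty then show ?case using False by blast
      next
        case (insert g G)
        then obtain X where X: "X \<in> C" "G \<subseteq> X" by blast
        obtain Y where Y: "Y \<in> C" "g \<in> Y" using insert.prems by blast
        from chainsD[OF C X(1) Y(1)] show ?case
        proof
          assume "X \<subseteq> Y" then show ?case using X Y by blast
        next
          assume "Y \<subseteq> X" then show ?case using X Y by blast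
        qed
      qed
      have "\<Union>C \<in> ?A"
      proof (intro CollectI conjI)
        show "F \<subseteq> \<Union>C" using False CA by blast
        show "\<Union>C \<subseteq> Pow I" using CA by blast
        show "fip (\<Union>C)" unfolding fip_def
        proof (intro allI impI, elim conjE)
          fix G assume G: "finite G" "G \<noteq> {}" "G \<subseteq> \<Union>C"
          then obtain X where "X \<in> C" "G \<subseteq> X" using sub by blast
          then have "fip X" using CA by blast
          then show "\<Inter>G \<noteq> {}" using G \<open>G \<subseteq> X\<close> unfolding fip_def by blast
        qed
      qed
      then show ?thesis by blast
    qed
  qed
  then have "\<exists>M\<in>?A. \<forall>X\<in>?A. M \<subseteq> X \<longrightarrow> X = M" by (rule Zorn_Lemma2)
  then obtain M where M: "M \<in> ?A" "\<forall>X\<in>?A. M \<subseteq> X \<longrightarrow> X = M" ..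
  have fipM: "fip M" and MI: "M \<subseteq> Pow I" and FM: "F \<subseteq> M" using M(1) by auto
  have ins: "Z \<in> M" if "Z \<subseteq> I" "\<forall>G. finite G \<and> G \<subseteq> M \<longrightarrow> Z \<inter> \<Inter>G \<noteq> {}" for Z
  proof -
    have f1: "F \<subseteq> insert Z M" using FM by blast
    have f2: "insert Z M \<subseteq> Pow I" using that(1) MI by simp
    have f3: "fip (insert Z M)" by (rule fip_insert[OF fipM that(2)])
    have "insert Z M \<in> ?A" using f1 f2 f3 by (intro CollectI conjI)
    moreover have "M \<subseteq> insert Z M" by (rule subset_insertI)
    ultimately have "insert Z M = M" by (rule M(2)[rule_format])
    then show ?thesis using insertI1[of Z M] by simp
  qed
  have ne: "\<Inter>G \<noteq> {}" if "finite G" "G \<subseteq> M" "G \<noteq> {}" for G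
    using fipM that unfolding fip_def by blast
  have IM: "I \<in> M"
  proof (rule ins)
    show "I \<subseteq> I" by simp
    show "\<forall>G. finite G \<and> G \<subseteq> M \<longrightarrow> I \<inter> \<Inter>G \<noteq> {}"
    proof (intro allI impI, elim conjE)
      fix G assume G: "finite G" "G \<subseteq> M"
      show "I \<inter> \<Inter>G \<noteq> {}"
      proof (cases "G = {}")
        case True then show ?thesis using assms(3) by simp
      next
        case False
        have "\<Inter>G \<subseteq> I" using False G(2) MI by blast
        then show ?thesis using ne[OF G False] by blast
      qed
    qed
  qed
  have emp: "{} \<notin> M" using ne[of "{{}}"] by blast
  have int: "X \<inter> Y \<in> M" if "X \<in> M" "Y \<in> M" for X Y
  proof (rule ins)
    show "X \<inter> Y \<subseteq> I" using that MI by blast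
    show "\<forall>G. finite G \<and> G \<subseteq> M \<longrightarrow> X \<inter> Y \<inter> \<Inter>G \<noteq> {}"
    proof (intro allI impI, elim conjE)
      fix G assume G: "finite G" "G \<subseteq> M"
      have "\<Inter>(insert X (insert Y G)) \<noteq> {}" using ne[of "insert X (insert Y G)"] G that by blast
      then show "X \<inter> Y \<inter> \<Inter>G \<noteq> {}" by (simp add: Int_assoc)
    qed
  qed
  have sup: "Y \<in> M" if "X \<in> M" "X \<subseteq> Y" "Y \<subseteq> I" for X Y
  proof (rule ins[OF that(3)])
    show "\<forall>G. finite G \<and> G \<subseteq> M \<longrightarrow> Y \<inter> \<Inter>G \<noteq> {}"
    proof (intro allI impI, elim conjE)
      fix G assume G: "finite G" "G \<subseteq> M"
      have "\<Inter>(insert X G) \<noteq> {}" using ne[of "insert X G"] G that by blast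
      then show "Y \<inter> \<Inter>G \<noteq> {}" using that(2) by blast
    qed
  qed
  have compl: "X \<in> M \<or> I - X \<in> M" if X: "X \<subseteq> I" for X
  proof (rule ccontr)
    assume H: "\<not> (X \<in> M \<or> I - X \<in> M)"
    obtain G1 where G1: "finite G1" "G1 \<subseteq> M" "X \<inter> \<Inter>G1 = {}" using H ins[OF X] by blast
    obtain G2 where G2: "finite G2" "G2 \<subseteq> M" "(I - X) \<inter> \<Inter>G2 = {}"
      using H ins[of "I - X"] by blast
    have "finite (insert I (G1 \<union> G2))" using G1(1) G2(1) by simp
    moreover have "insert I (G1 \<union> G2) \<subseteq> M" using G1(2) G2(2) IM by simp
    ultimately have "\<Inter>(insert I (G1 \<union> G2)) \<noteq> {}" using ne by blast
    moreover have "\<Inter>(insert I (G1 \<union> G2)) = {}"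
    proof -
      have "x \<notin> \<Inter>(insert I (G1 \<union> G2))" for x
      proof
        assume x: "x \<in> \<Inter>(insert I (G1 \<union> G2))"
        then have "x \<in> I" "x \<in> \<Inter>G1" "x \<in> \<Inter>G2" by auto
        then show False using G1(3) G2(3) by (cases "x \<in> X") blast+
      qed
      then show ?thesis by blast
    qed
    ultimately show False by blast
  qed
  have "ultrafilter_on I M" unfolding ultrafilter_on_def
  proof (intro conjI ballI allI impI)
    show "M \<subseteq> Pow I" by (rule MI)
    show "I \<in> M" by (rule IM)
    show "{} \<notin> M" by (rule emp)
  next
    fix X Y assume "X \<in> M" "Y \<in> M" then show "X \<inter> Y \<in> M" by (rule int)
  next
    fix X Y assume "X \<in> M" "X \<subseteq> Y \<and> Y \<subseteq> I" then show "Y \<in> M" using sup by blast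
  next
    fix X assume "X \<subseteq> I" then show "X \<in> M \<or> I - X \<in> M" by (rule compl)
  qed
  then show ?thesis using FM by blast
qed

context includes cardinal_syntax begin

lemma fip_Qfam: "fip (Qfam :: 'a set set set)"
  unfolding fip_def
proof (intro allI impI, elim conjE)
  fix G :: "'a set set set" assume G: "finite G" "G \<noteq> {}" "G \<subseteq> Qfam"
  let ?Q1 = "{Qlt A B | A B. A \<in> W \<and> B \<in> W \<and> |A| <o |B|} :: 'a set set set"
  let ?G1 = "G \<inter> ?Q1"
  let ?G2 = "G - ?G1"
  have ex1: "\<exists>q. X = Qlt (fst q) (snd q) \<and> fst q \<in> W \<and> snd q \<in> W \<and> |fst q| <o |snd q|" if X: "X \<in> ?G1" for X
  proof -
    from X have "X \<in> ?Q1" by blast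
    then obtain A B where AB: "X = Qlt A B" "A \<in> W" "B \<in> W" "|A| <o |B|" by blast
    then have "X = Qlt (fst (A,B)) (snd (A,B)) \<and> fst (A,B) \<in> W \<and> snd (A,B) \<in> W \<and> |fst (A,B)| <o |snd (A,B)|"
      by simp
    then show ?thesis by (rule exI)
  qed
  define f :: "'a set set \<Rightarrow> 'a point set \<times> 'a point set" where "f X = (SOME q. X = Qlt (fst q) (snd q) \<and> fst q \<in> W \<and> snd q \<in> W \<and> (card_of (fst q), card_of (snd q)) \<in> ordLess)" for X
  have f: "X = Qlt (fst (f X)) (snd (f X)) \<and> fst (f X) \<in> W \<and> snd (f X) \<in> W \<and> |fst (f X)| <o |snd (f X)|"
    if "X \<in> ?G1" for X
    unfolding f_def by (rule someI_ex[OF ex1[OF that]])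
  have ex2: "\<exists>d. X = Defs.cone d \<and> finite d" if X: "X \<in> ?G2" for X
  proof -
    have "X \<in> Qfam" "X \<notin> ?Q1" using X G(3) by blast+
    then have "X \<in> {Defs.cone d | d. d \<in> Iset}" unfolding Qfam_def by blast
    then show ?thesis unfolding Iset_def by blast
  qed
  define g :: "'a set set \<Rightarrow> 'a set" where "g X = (SOME d. X = Defs.cone d \<and> finite d)" for X
  have g: "X = Defs.cone (g X) \<and> finite (g X)" if "X \<in> ?G2" for X
    unfolding g_def by (rule someI_ex[OF ex2[OF that]])
  let ?P = "f ` ?G1"
  let ?d = "\<Union>(g ` ?G2)"
  have fP: "finite ?P" using G(1) by simp
  have hP: "\<forall>p\<in>?P. fst p \<in> W \<and> snd p \<in> W \<and> |fst p| <o |snd p|"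
  proof
    fix p assume "p \<in> ?P"
    then obtain X where "X \<in> ?G1" "p = f X" by blast
    then show "fst p \<in> W \<and> snd p \<in> W \<and> |fst p| <o |snd p|" using f by blast
  qed
  have fd: "finite ?d"
  proof (rule finite_UN_I)
    show "finite ?G2" using G(1) by simp
    fix X assume "X \<in> ?G2" then show "finite (g X)" using g by blast
  qed
  obtain i where i: "finite i" "?d \<subseteq> i" "\<forall>p\<in>?P. card (restr (fst p) i) < card (restr (snd p) i)"
    using key[OF fP hP fd] by blast
  have "i \<in> X" if X: "X \<in> G" for X
  proof (cases "X \<in> ?G1")
    case True
    have fx: "X = Qlt (fst (f X)) (snd (f X))" using f[OF True] by blast
    have "f X \<in> ?P" using True by blast
    then have "card (restr (fst (f X)) i) < card (restr (snd (f X)) i)" using i(3) by blast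
    then have "i \<in> Qlt (fst (f X)) (snd (f X))" unfolding Qlt_def Iset_def using i(1) by blast
    then show ?thesis using fx by simp
  next
    case False
    then have X2: "X \<in> ?G2" using X by blast
    then have "X = Defs.cone (g X)" using g by blast
    moreover have "g X \<subseteq> i" using X2 i(2) by blast
    ultimately show ?thesis using i(1) unfolding Defs.cone_def Iset_def by blast
  qed
  then show "\<Inter>G \<noteq> {}" by blast
qed

lemma hume:
  fixes U :: "'a set set set"
  assumes U: "ultrafilter_on Iset U" "Qfam \<subseteq> U" and AB: "A \<in> W" "B \<in> W" "num_le U A B"
  shows "\<exists>f. inj_on f A \<and> f ` A \<subseteq> B"
proof (rule ccontr)
  assume "\<not> ?thesis"
  then have "\<not> |A| \<le>o |B|" unfolding card_of_ordLeq[symmetric] .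
  then have BA: "|B| <o |A|" using not_ordLeq_iff_ordLess[OF card_of_Well_order card_of_Well_order] by blast
  have "Qlt B A \<in> {Qlt A B | A B. A \<in> W \<and> B \<in> W \<and> |A| <o |B|}" using AB(1,2) BA by blast
  then have "Qlt B A \<in> Qfam" unfolding Qfam_def by (rule UnI1)
  then have q: "Qlt B A \<in> U" using U(2) by blast
  have x: "{i\<in>Iset. card (restr A i) \<le> card (restr B i)} \<in> U" using AB(3) unfolding num_le_def .
  have "{i\<in>Iset. card (restr A i) \<le> card (restr B i)} \<inter> Qlt B A \<in> U"
    using U(1) q x unfolding ultrafilter_on_def by blast
  moreover have "{i\<in>Iset. card (restr A i) \<le> card (restr B i)} \<inter> Qlt B A = {}"
    unfolding Qlt_def by auto
  ultimately show False using U(1) unfolding ultrafilter_on_def by simp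
qed

end

lemma Qfam_sub: "Qfam \<subseteq> Pow Iset"
  unfolding Qfam_def Qlt_def Defs.cone_def by blast

theorem mainTheorem9:
  assumes "infinite (UNIV :: 'a set)"
  shows "fip (Qfam :: 'a set set set)
     \<and> (\<exists>U. ultrafilter_on (Iset :: 'a set set) U \<and> fine U \<and> Qfam \<subseteq> U)
     \<and> (\<forall>U. ultrafilter_on (Iset :: 'a set set) U \<and> fine U \<and> Qfam \<subseteq> U \<longrightarrow>
          (\<forall>A\<in>W. \<forall>B\<in>W. num_le U A B \<longrightarrow> (\<exists>f. inj_on f A \<and> f ` A \<subseteq> B)))"
proof (intro conjI)
  show "fip (Qfam :: 'a set set set)" by (rule fip_Qfam)
  have ne: "(Iset :: 'a set set) \<noteq> {}" unfolding Iset_def by blast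
  obtain U where U: "ultrafilter_on (Iset :: 'a set set) U" "Qfam \<subseteq> U"
    using ultra_exists[OF fip_Qfam Qfam_sub ne] by blast
  have "fine U" unfolding fine_def using U(2) unfolding Qfam_def by blast
  then show "\<exists>U. ultrafilter_on (Iset :: 'a set set) U \<and> fine U \<and> Qfam \<subseteq> U" using U by blast
  show "\<forall>U. ultrafilter_on (Iset :: 'a set set) U \<and> fine U \<and> Qfam \<subseteq> U \<longrightarrow>
          (\<forall>A\<in>W. \<forall>B\<in>W. num_le U A B \<longrightarrow> (\<exists>f. inj_on f A \<and> f ` A \<subseteq> B))"
    using hume by blast
qed

end
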